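(* Let $\mathbb S$ be the free semigroup action on the compact metric space $X$ generated by continuous maps $g_1,\dots,g_p$. Then the set $E^f_p(X,\mathbb S)$ of full entropy points of $\mathbb S$ is nonempty.
   Context: Setting: $(X,d)$ compact metric space, $g_1,\dots,g_p:X\to X$ continuous; $G_n^*$ the set of words $\underline g=g_{i_n}\cdots g_{i_1}$, $i_j\in\{1,\dots,p\}$; $d_{\underline g}(x,y)=\max_{0\le j\le n}d(g_{i_j}\cdots g_{i_1}x,g_{i_j}\cdots g_{i_1}y)$; $s(K,\underline g,\varepsilon)$ the maximal cardinality of a $(\underline g,\varepsilon)$-separated subset of $K$; $h_{top}(K,\mathbb S)=\lim_{\varepsilon\to0}\limsup_n\frac1n\log\big(p^{-n}\sum_{\underline g\in G_n^*}s(K,\underline g,\varepsilon)\big)$. A point $x_0$ is a full entropy point if $h_{top}(K,\mathbb S)=h_{top}(X,\mathbb S)$ for every closed neighbourhood $K$ of $x_0$. *)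

theory Defs
  imports "HOL-Analysis.Analysis"
begin

text \<open>Generators are indexed by 1..p: g :: nat => 'a => 'a, with g i the i-th map.
A word g_{i_n} ... g_{i_1} in G_n^* is represented by the list [i_1, ..., i_n]
(listed in order of application), with entries in {1..p}.\<close>

definition words :: "nat \<Rightarrow> nat \<Rightarrow> nat list set" where
  "words p n = {w. length w = n \<and> set w \<subseteq> {1..p}}"

fun word_comp :: "(nat \<Rightarrow> 'a \<Rightarrow> 'a) \<Rightarrow> nat list \<Rightarrow> 'a \<Rightarrow> 'a" where
  "word_comp g [] = id"
| "word_comp g (i # w) = word_comp g w \<circ> g i"

definition word_dist :: "(nat \<Rightarrow> 'a::metric_space \<Rightarrow> 'a) \<Rightarrow> nat list \<Rightarrow> 'a \<Rightarrow> 'a \<Rightarrow> real" where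
  "word_dist g w x y =
     Max ((\<lambda>j. dist (word_comp g (take j w) x) (word_comp g (take j w) y)) ` {0..length w})"

definition separated :: "(nat \<Rightarrow> 'a::metric_space \<Rightarrow> 'a) \<Rightarrow> nat list \<Rightarrow> real \<Rightarrow> 'a set \<Rightarrow> bool" where
  "separated g w \<epsilon> S \<longleftrightarrow> (\<forall>x\<in>S. \<forall>y\<in>S. x \<noteq> y \<longrightarrow> word_dist g w x y > \<epsilon>)"

definition max_sep :: "(nat \<Rightarrow> 'a::metric_space \<Rightarrow> 'a) \<Rightarrow> 'a set \<Rightarrow> nat list \<Rightarrow> real \<Rightarrow> nat" where
  "max_sep g K w \<epsilon> = Sup {card S | S. S \<subseteq> K \<and> finite S \<and> separated g w \<epsilon> S}"

definition htop :: "nat \<Rightarrow> (nat \<Rightarrow> 'a::metric_space \<Rightarrow> 'a) \<Rightarrow> 'a set \<Rightarrow> ereal" where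
  "htop p g K = Lim (at_right 0) (\<lambda>\<epsilon>::real.
      limsup (\<lambda>n::nat. ereal (ln ((1 / real p ^ n) * (\<Sum>w\<in>words p n. real (max_sep g K w \<epsilon>))) / real n)))"

definition full_entropy_point :: "nat \<Rightarrow> (nat \<Rightarrow> 'a::metric_space \<Rightarrow> 'a) \<Rightarrow> 'a \<Rightarrow> bool" where
  "full_entropy_point p g x0 \<longleftrightarrow>
     (\<forall>K. closed K \<and> x0 \<in> interior K \<longrightarrow> htop p g K = htop p g UNIV)"

end

theory Submission
  imports Defs
begin


lemma word_comp_cont:
  assumes "\<And>i. i \<in> set v \<Longrightarrow> continuous_on UNIV (g i)"
  shows "continuous_on UNIV (word_comp g v)"
  using assms
proof (induction v)
  case Nil then show ?case by (simp add: continuous_on_id)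
next
  case (Cons i v)
  have "continuous_on UNIV (g i)" using Cons.prems by simp
  moreover have "continuous_on UNIV (word_comp g v)" using Cons by simp
  ultimately show ?case by (auto intro: continuous_on_compose2)
qed

lemma word_dist_gt:
  assumes "word_dist g w x y > e"
  shows "\<exists>j\<in>{0..length w}. dist (word_comp g (take j w) x) (word_comp g (take j w) y) > e"
  using assms unfolding word_dist_def by (subst (asm) Max_gr_iff) auto

lemma sep_bound:
  fixes g :: "nat \<Rightarrow> 'a::metric_space \<Rightarrow> 'a"
  assumes cpt: "compact (UNIV :: 'a set)"
    and cont: "\<And>i. i \<in> set w \<Longrightarrow> continuous_on UNIV (g i)"
    and e: "e > 0"
  shows "\<exists>N. \<forall>S. separated g w e S \<longrightarrow> finite S \<longrightarrow> card S \<le> N"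
proof -
  have uc: "uniformly_continuous_on UNIV (word_comp g (take j w))" for j
  proof -
    have "\<And>i. i \<in> set (take j w) \<Longrightarrow> continuous_on UNIV (g i)"
      using cont by (meson in_set_takeD)
    then have "continuous_on UNIV (word_comp g (take j w))" by (rule word_comp_cont)
    then show ?thesis using cpt by (rule compact_uniformly_continuous)
  qed
  have "\<forall>j. \<exists>d>0. \<forall>x y. dist x y < d \<longrightarrow> dist (word_comp g (take j w) x) (word_comp g (take j w) y) < e"
    using uc e unfolding uniformly_continuous_on_def by blast
  then obtain d where d: "\<And>j. d j > 0"
    "\<And>j x y. dist x y < d j \<Longrightarrow> dist (word_comp g (take j w) x) (word_comp g (take j w) y) < e"
    by metis
  define \<delta> where "\<delta> = Min (d ` {0..length w})"
  have \<delta>pos: "\<delta> > 0" unfolding \<delta>_def using d(1) by (subst Min_gr_iff) auto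
  have \<delta>le: "\<delta> \<le> d j" if "j \<in> {0..length w}" for j unfolding \<delta>_def using that by auto
  have cov: "(UNIV::'a set) \<subseteq> (\<Union>c\<in>UNIV. ball c (\<delta>/2))" using \<delta>pos by auto
  have opn: "\<And>c::'a. c \<in> UNIV \<Longrightarrow> open (ball c (\<delta>/2))" by simp
  obtain C :: "'a set" where C0: "C \<subseteq> UNIV" and C: "finite C" "UNIV \<subseteq> (\<Union>c\<in>C. ball c (\<delta>/2))"
    by (rule compactE_image[OF cpt opn cov])
  show ?thesis
  proof (intro exI allI impI)
    fix S assume sep: "separated g w e S" and fin: "finite S"
    have "\<forall>s. \<exists>c\<in>C. s \<in> ball c (\<delta>/2)" using C(2) by blast
    then obtain f where f: "\<And>s. f s \<in> C" "\<And>s. s \<in> ball (f s) (\<delta>/2)" by metis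
    have "inj_on f S"
    proof (rule inj_onI, rule ccontr)
      fix x y assume xy: "x \<in> S" "y \<in> S" "f x = f y" "x \<noteq> y"
      have h1: "dist (f x) x < \<delta>/2" using f(2)[of x] by simp
      have h2: "dist (f x) y < \<delta>/2" using f(2)[of y] xy(3) by simp
      have "dist x y \<le> dist x (f x) + dist y (f x)" by (rule dist_triangle2)
      then have "dist x y < \<delta>" using h1 h2 by (simp add: dist_commute)
      have "word_dist g w x y > e" using sep xy unfolding separated_def by auto
      then obtain j where j: "j \<in> {0..length w}" "dist (word_comp g (take j w) x) (word_comp g (take j w) y) > e"
        using word_dist_gt by blast
      have "dist x y < d j" using \<open>dist x y < \<delta>\<close> \<delta>le[OF j(1)] by linarith
      then show False using d(2) j(2) by fastforce
    qed
    then show "card S \<le> card C"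
      using card_inj_on_le[of f S C] f(1) C(1) by auto
  qed
qed



lemma ms_facts:
  fixes g :: "nat \<Rightarrow> 'a::metric_space \<Rightarrow> 'a"
  assumes cpt: "compact (UNIV :: 'a set)"
    and cont: "\<And>i. i \<in> set w \<Longrightarrow> continuous_on UNIV (g i)"
    and e: "e > 0"
  shows ms_upper: "S \<subseteq> K \<Longrightarrow> finite S \<Longrightarrow> separated g w e S \<Longrightarrow> card S \<le> max_sep g K w e"
    and ms_least: "(\<And>S. S \<subseteq> K \<Longrightarrow> finite S \<Longrightarrow> separated g w e S \<Longrightarrow> card S \<le> b) \<Longrightarrow> max_sep g K w e \<le> b"
proof -
  obtain N where N: "\<And>S. separated g w e S \<Longrightarrow> finite S \<Longrightarrow> card S \<le> N"
    using sep_bound[OF cpt, of w g e] cont e by blast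
  have bdd: "bdd_above {card S | S. S \<subseteq> K \<and> finite S \<and> separated g w e S}"
    by (rule bdd_aboveI[of _ N]) (auto intro: N)
  have ne: "{card S | S. S \<subseteq> K \<and> finite S \<and> separated g w e S} \<noteq> {}"
  proof -
    have "card {} \<in> {card S | S. S \<subseteq> K \<and> finite S \<and> separated g w e S}"
      by (rule CollectI, rule exI[of _ "{}"]) (simp add: separated_def)
    then show ?thesis by blast
  qed
  show "S \<subseteq> K \<Longrightarrow> finite S \<Longrightarrow> separated g w e S \<Longrightarrow> card S \<le> max_sep g K w e"
    unfolding max_sep_def by (rule cSup_upper[OF _ bdd]) auto
  show "(\<And>S. S \<subseteq> K \<Longrightarrow> finite S \<Longrightarrow> separated g w e S \<Longrightarrow> card S \<le> b) \<Longrightarrow> max_sep g K w e \<le> b"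
    unfolding max_sep_def by (rule cSup_least[OF ne]) auto
qed

lemma separated_subset: "separated g w e S \<Longrightarrow> T \<subseteq> S \<Longrightarrow> separated g w e T"
  unfolding separated_def by blast

lemma separated_mono_e: "separated g w e2 S \<Longrightarrow> e1 \<le> e2 \<Longrightarrow> separated g w e1 S"
  unfolding separated_def by force

context
  fixes g :: "nat \<Rightarrow> 'a::metric_space \<Rightarrow> 'a" and w :: "nat list"
  assumes cpt: "compact (UNIV :: 'a set)"
    and contb: "\<forall>i\<in>set w. continuous_on UNIV (g i)"
begin

lemma cont: "i \<in> set w \<Longrightarrow> continuous_on UNIV (g i)" using contb by blast

lemma ms_mono_K: "e > 0 \<Longrightarrow> K \<subseteq> L \<Longrightarrow> max_sep g K w e \<le> max_sep g L w e"
  using ms_least[where w=w and g=g, OF cpt cont, where e=e and K=K] ms_upper[where w=w and g=g, OF cpt cont, where e=e and K=L] by blast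

lemma ms_mono_e: "0 < e1 \<Longrightarrow> e1 \<le> e2 \<Longrightarrow> max_sep g K w e2 \<le> max_sep g K w e1"
  using ms_least[where w=w and g=g, OF cpt cont, where e=e2 and K=K] ms_upper[where w=w and g=g, OF cpt cont, where e=e1 and K=K] separated_mono_e[of g w e2 _ e1]
  by (meson order_less_le_trans)

lemma ms_pos: "e > 0 \<Longrightarrow> x \<in> K \<Longrightarrow> 1 \<le> max_sep g K w e"
  using ms_upper[where w=w and g=g, OF cpt cont, where e=e and S="{x}" and K=K] by (auto simp: separated_def)

lemma ms_union: "e > 0 \<Longrightarrow> max_sep g (A \<union> B) w e \<le> max_sep g A w e + max_sep g B w e"
proof (rule ms_least[where w=w and g=g, OF cpt cont, where e=e], assumption)
  fix S assume e: "e > 0" and S: "S \<subseteq> A \<union> B" "finite S" "separated g w e S"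
  have "card S \<le> card (S \<inter> A) + card (S - A)"
    by (metis Int_Diff_Un Int_Diff_disjoint S(2) card_Un_disjoint finite_Diff finite_Int le_refl)
  also have "card (S \<inter> A) \<le> max_sep g A w e"
    by (rule ms_upper[OF cpt cont e]) (use S in \<open>auto intro: separated_subset\<close>)
  also have "card (S - A) \<le> max_sep g B w e"
    by (rule ms_upper[OF cpt cont e]) (use S in \<open>auto intro: separated_subset\<close>)
  finally show "card S \<le> max_sep g A w e + max_sep g B w e" by simp
qed

end
definition Ssum :: "nat \<Rightarrow> (nat \<Rightarrow> 'a::metric_space \<Rightarrow> 'a) \<Rightarrow> 'a set \<Rightarrow> real \<Rightarrow> nat \<Rightarrow> real" where
  "Ssum p g K e n = (\<Sum>w\<in>words p n. real (max_sep g K w e))"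

definition aseq :: "nat \<Rightarrow> (nat \<Rightarrow> 'a::metric_space \<Rightarrow> 'a) \<Rightarrow> 'a set \<Rightarrow> real \<Rightarrow> nat \<Rightarrow> ereal" where
  "aseq p g K e n = ereal (ln ((1 / real p ^ n) * Ssum p g K e n) / real n)"

definition Fe :: "nat \<Rightarrow> (nat \<Rightarrow> 'a::metric_space \<Rightarrow> 'a) \<Rightarrow> 'a set \<Rightarrow> real \<Rightarrow> ereal" where
  "Fe p g K e = limsup (aseq p g K e)"

lemma htop_Fe: "htop p g K = Lim (at_right 0) (Fe p g K)"
  unfolding htop_def Fe_def aseq_def Ssum_def ..

lemma words_finite: "finite (words p n)"
proof -
  have "words p n = {xs. set xs \<subseteq> {1..p} \<and> length xs = n}" unfolding words_def by auto
  then show ?thesis using finite_lists_length_eq[of "{1..p}" n] by simp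
qed

lemma ln_div_mono:
  fixes c X Y :: real
  assumes "c > 0" "X > 0" "X \<le> Y"
  shows "ln (c * X) / real n \<le> ln (c * Y) / real n"
proof -
  have "ln (c * X) \<le> ln (c * Y)" using assms by (simp add: mult_left_mono)
  then show ?thesis by (simp add: divide_right_mono)
qed

lemma ln_div_union:
  fixes c X Y Z :: real
  assumes "c > 0" "X > 0" "Y > 0" "Z > 0" "Z \<le> X + Y"
  shows "ln (c * Z) / real n \<le> ln 2 / real n + max (ln (c * X) / real n) (ln (c * Y) / real n)"
proof -
  have "c * Z \<le> 2 * max (c * X) (c * Y)" using assms
    by (smt (verit, ccfv_SIG) mult_left_mono distrib_left)
  moreover have "0 < c * Z" "0 < 2 * max (c * X) (c * Y)" using assms by (auto simp: less_max_iff_disj)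
  ultimately have "ln (c * Z) \<le> ln (2 * max (c * X) (c * Y))" by simp
  also have "\<dots> = ln 2 + max (ln (c * X)) (ln (c * Y))" using assms
    by (simp add: ln_mult max_def)
  finally have *: "ln (c * Z) \<le> ln 2 + max (ln (c * X)) (ln (c * Y))" .
  have "ln (c * Z) / real n \<le> (ln 2 + max (ln (c * X)) (ln (c * Y))) / real n"
    using * by (simp add: divide_right_mono)
  also have "\<dots> = ln 2 / real n + max (ln (c * X) / real n) (ln (c * Y) / real n)"
  proof (cases "ln (c * X) \<le> ln (c * Y)")
    case True
    then have "ln (c * X) / real n \<le> ln (c * Y) / real n" by (simp add: divide_right_mono)
    with True show ?thesis by (simp add: add_divide_distrib max_def)
  next
    case False
    then have "ln (c * Y) / real n \<le> ln (c * X) / real n" by (simp add: divide_right_mono)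
    with False show ?thesis by (auto simp: add_divide_distrib max_def)
  qed
  finally show ?thesis .
qed

lemma limsup_max_le:
  fixes u v :: "nat \<Rightarrow> ereal"
  shows "limsup (\<lambda>n. max (u n) (v n)) \<le> max (limsup u) (limsup v)"
proof (subst Limsup_le_iff, intro allI impI)
  fix y assume y: "y > max (limsup u) (limsup v)"
  have "eventually (\<lambda>n. u n < y) sequentially"
    using y Limsup_le_iff[of sequentially u "limsup u"] by auto
  moreover have "eventually (\<lambda>n. v n < y) sequentially"
    using y Limsup_le_iff[of sequentially v "limsup v"] by auto
  ultimately show "eventually (\<lambda>n. max (u n) (v n) < y) sequentially"
    by eventually_elim auto
qed

lemma limsup_ln2: "limsup (\<lambda>n. ereal (ln 2 / real n)) = 0"
proof -
  have "(\<lambda>n. ln 2 / real n) \<longlonglongrightarrow> 0" by (rule lim_const_over_n)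
  then have "(\<lambda>n. ereal (ln 2 / real n)) \<longlonglongrightarrow> ereal 0" by (rule tendsto_ereal)
  then have "limsup (\<lambda>n. ereal (ln 2 / real n)) = ereal 0" by (rule lim_imp_Limsup[OF trivial_limit_sequentially])
  then show ?thesis by (simp add: zero_ereal_def)
qed

lemma mono_at_right_SUP:
  fixes f :: "real \<Rightarrow> ereal"
  assumes mono: "\<And>a b. 0 < a \<Longrightarrow> a \<le> b \<Longrightarrow> f b \<le> f a"
  shows "(f \<longlongrightarrow> (SUP e\<in>{0<..}. f e)) (at_right 0)"
proof (rule order_tendstoI)
  fix a assume "a < (SUP e\<in>{0<..}. f e)"
  then obtain e0 where e0: "e0 > 0" "a < f e0" by (auto simp: less_SUP_iff)
  have "eventually (\<lambda>x. x \<in> {0<..<e0}) (at_right (0::real))"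
    using e0 by (intro eventually_at_right_real)
  then show "eventually (\<lambda>x. a < f x) (at_right 0)"
  proof eventually_elim
    case (elim x)
    then have "f e0 \<le> f x" using mono[of x e0] by simp
    then show ?case using e0(2) by (meson less_le_trans)
  qed
next
  fix a assume a: "(SUP e\<in>{0<..}. f e) < a"
  have "eventually (\<lambda>x. 0 < x) (at_right (0::real))" by (rule eventually_at_right_less)
  then show "eventually (\<lambda>x. f x < a) (at_right 0)"
  proof eventually_elim
    case (elim x)
    then have "f x \<le> (SUP e\<in>{0<..}. f e)" by (intro SUP_upper) auto
    then show ?case using a by auto
  qed
qed

locale fe =
  fixes g :: "nat \<Rightarrow> 'a::metric_space \<Rightarrow> 'a" and p :: nat
  assumes cpt: "compact (UNIV :: 'a set)"
    and p1: "p \<ge> 1"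
    and cont: "\<And>i. i \<in> {1..p} \<Longrightarrow> continuous_on UNIV (g i)"
begin

lemma contw: "w \<in> words p n \<Longrightarrow> \<forall>i\<in>set w. continuous_on UNIV (g i)"
  using cont unfolding words_def by auto

lemma Ssum_pos: "K \<noteq> {} \<Longrightarrow> e > 0 \<Longrightarrow> Ssum p g K e n > 0"
proof -
  assume K: "K \<noteq> {}" and e: "e > 0"
  then obtain x where x: "x \<in> K" by auto
  have r: "replicate n 1 \<in> words p n" using p1 unfolding words_def by auto
  have "1 \<le> real (max_sep g K (replicate n 1) e)"
    using ms_pos[OF cpt contw[OF r] e x] by simp
  also have "\<dots> \<le> Ssum p g K e n" unfolding Ssum_def
    by (rule member_le_sum[OF r _ words_finite]) simp
  finally show ?thesis by linarith
qed

lemma Ssum_mono_K: assumes "K \<subseteq> L" "e > 0" shows "Ssum p g K e n \<le> Ssum p g L e n"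
  unfolding Ssum_def
proof (rule sum_mono)
  fix w assume w: "w \<in> words p n"
  show "real (max_sep g K w e) \<le> real (max_sep g L w e)"
    using ms_mono_K[OF cpt contw[OF w], of e K L] assms by simp
qed

lemma Ssum_mono_e: assumes "0 < e1" "e1 \<le> e2" shows "Ssum p g K e2 n \<le> Ssum p g K e1 n"
  unfolding Ssum_def
proof (rule sum_mono)
  fix w assume w: "w \<in> words p n"
  show "real (max_sep g K w e2) \<le> real (max_sep g K w e1)"
    using ms_mono_e[OF cpt contw[OF w], of e1 e2 K] assms by simp
qed

lemma Ssum_union: assumes "e > 0" shows "Ssum p g (A \<union> B) e n \<le> Ssum p g A e n + Ssum p g B e n"
  unfolding Ssum_def sum.distrib[symmetric]
proof (rule sum_mono)
  fix w assume w: "w \<in> words p n"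
  show "real (max_sep g (A \<union> B) w e) \<le> real (max_sep g A w e) + real (max_sep g B w e)"
    using ms_union[OF cpt contw[OF w], of e A B] assms by simp
qed

lemma cpos: "(1 / real p ^ n) > 0" using p1 by simp

lemma Fe_mono_e: "K \<noteq> {} \<Longrightarrow> 0 < e1 \<Longrightarrow> e1 \<le> e2 \<Longrightarrow> Fe p g K e2 \<le> Fe p g K e1"
  unfolding Fe_def aseq_def
  by (intro Limsup_mono always_eventually allI, unfold ereal_less_eq(3), rule ln_div_mono[OF cpos])
     (auto intro: Ssum_pos Ssum_mono_e)

lemma Fe_mono_K: "K \<noteq> {} \<Longrightarrow> K \<subseteq> L \<Longrightarrow> 0 < e \<Longrightarrow> Fe p g K e \<le> Fe p g L e"
  unfolding Fe_def aseq_def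
  by (intro Limsup_mono always_eventually allI, unfold ereal_less_eq(3), rule ln_div_mono[OF cpos])
     (auto intro: Ssum_pos Ssum_mono_K)

lemma Fe_union: assumes "A \<noteq> {}" "B \<noteq> {}" "0 < e"
  shows "Fe p g (A \<union> B) e \<le> max (Fe p g A e) (Fe p g B e)"
proof -
  have "Fe p g (A \<union> B) e \<le> limsup (\<lambda>n. ereal (ln 2 / real n) + max (aseq p g A e n) (aseq p g B e n))"
    unfolding Fe_def
  proof (intro Limsup_mono always_eventually allI)
    fix n
    have "ln ((1 / real p ^ n) * Ssum p g (A \<union> B) e n) / real n \<le>
      ln 2 / real n + max (ln ((1 / real p ^ n) * Ssum p g A e n) / real n) (ln ((1 / real p ^ n) * Ssum p g B e n) / real n)"
      by (rule ln_div_union[OF cpos Ssum_pos Ssum_pos Ssum_pos Ssum_union]) (use assms in auto)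
    then show "aseq p g (A \<union> B) e n \<le> ereal (ln 2 / real n) + max (aseq p g A e n) (aseq p g B e n)"
    proof -
      have m: "\<And>a b :: real. max (ereal a) (ereal b) = ereal (max a b)" by (simp add: max_def)
      show ?thesis unfolding aseq_def m plus_ereal.simps(1) ereal_less_eq(3) by fact
    qed
  qed
  also have "\<dots> \<le> limsup (\<lambda>n. ereal (ln 2 / real n)) + limsup (\<lambda>n. max (aseq p g A e n) (aseq p g B e n))"
    by (rule ereal_limsup_add_mono)
  also have "\<dots> \<le> max (Fe p g A e) (Fe p g B e)"
    unfolding limsup_ln2 Fe_def using limsup_max_le by simp
  finally show ?thesis .
qed

lemma htop_SUP: "K \<noteq> {} \<Longrightarrow> htop p g K = (SUP e\<in>{0<..}. Fe p g K e)"
  unfolding htop_Fe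
  by (rule tendsto_Lim[OF trivial_limit_at_right_real mono_at_right_SUP]) (rule Fe_mono_e)

lemma htop_mono: "K \<noteq> {} \<Longrightarrow> K \<subseteq> L \<Longrightarrow> htop p g K \<le> htop p g L"
proof -
  assume K: "K \<noteq> {}" and KL: "K \<subseteq> L"
  then have L: "L \<noteq> {}" by auto
  show ?thesis unfolding htop_SUP[OF K] htop_SUP[OF L]
  proof (rule SUP_mono)
    fix e :: real assume "e \<in> {0<..}"
    then show "\<exists>m\<in>{0<..}. Fe p g K e \<le> Fe p g L m" using Fe_mono_K[OF K KL, of e] by auto
  qed
qed

lemma htop_union: "A \<noteq> {} \<Longrightarrow> B \<noteq> {} \<Longrightarrow> htop p g (A \<union> B) \<le> max (htop p g A) (htop p g B)"
proof -
  assume A: "A \<noteq> {}" and B: "B \<noteq> {}"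
  have "htop p g (A \<union> B) = (SUP e\<in>{0<..}. Fe p g (A \<union> B) e)" using A by (intro htop_SUP) auto
  also have "\<dots> \<le> max (htop p g A) (htop p g B)"
  proof (rule SUP_least)
    fix e :: real assume "e \<in> {0<..}"
    then have e: "e > 0" by simp
    have "Fe p g (A \<union> B) e \<le> max (Fe p g A e) (Fe p g B e)" by (rule Fe_union[OF A B e])
    also have "\<dots> \<le> max (htop p g A) (htop p g B)"
      unfolding htop_SUP[OF A] htop_SUP[OF B]
      by (intro max.mono SUP_upper) (use e in auto)
    finally show "Fe p g (A \<union> B) e \<le> max (htop p g A) (htop p g B)" .
  qed
  finally show ?thesis .
qed

end

theorem mainTheorem7:
  fixes g :: "nat \<Rightarrow> 'a::metric_space \<Rightarrow> 'a" and p :: nat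
  assumes "compact (UNIV :: 'a set)"
    and "p \<ge> 1"
    and "\<And>i. i \<in> {1..p} \<Longrightarrow> continuous_on UNIV (g i)"
  shows "{x0. full_entropy_point p g x0} \<noteq> {}"
proof
  assume E: "{x0. full_entropy_point p g x0} = {}"
  interpret fe g p using assms by (simp add: fe_def)
  have "\<forall>x. \<exists>K. closed K \<and> x \<in> interior K \<and> htop p g K \<noteq> htop p g UNIV"
  proof
    fix x :: 'a
    have "\<not> full_entropy_point p g x" using E by blast
    then show "\<exists>K. closed K \<and> x \<in> interior K \<and> htop p g K \<noteq> htop p g UNIV"
      unfolding full_entropy_point_def by blast
  qed
  then obtain K where KK: "\<forall>x. closed (K x) \<and> x \<in> interior (K x) \<and> htop p g (K x) \<noteq> htop p g UNIV"
    by (rule choice[THEN exE])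
  have K: "\<And>x. closed (K x)" "\<And>x. x \<in> interior (K x)"
      "\<And>x. htop p g (K x) \<noteq> htop p g UNIV" using KK by simp_all
  have cov: "UNIV \<subseteq> (\<Union>x\<in>UNIV. interior (K x))" using K(2) by blast
  have opn: "\<And>x. x \<in> UNIV \<Longrightarrow> open (interior (K x))" by simp
  obtain D where D: "D \<subseteq> UNIV" "finite D" "UNIV \<subseteq> (\<Union>x\<in>D. interior (K x))"
    by (rule compactE_image[OF assms(1) opn cov])
  have Dne: "D \<noteq> {}"
  proof
    assume "D = {}"
    then have "UNIV \<subseteq> ({}::'a set)" using D(3) by simp
    then show False by simp
  qed
  have Kne: "K x \<noteq> {}" for x using K(2)[of x] interior_subset by blast
  have UK: "(\<Union>x\<in>D. K x) = UNIV" using D(3) interior_subset by blast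
  have claim: "\<exists>x\<in>D. htop p g (\<Union>x\<in>D. K x) \<le> htop p g (K x)"
    using D(2) Dne
  proof (induction D rule: finite_ne_induct)
    case (singleton x) then show ?case by simp
  next
    case (insert a F)
    then obtain x where x: "x \<in> F" "htop p g (\<Union>x\<in>F. K x) \<le> htop p g (K x)" by blast
    have "htop p g (\<Union>x\<in>insert a F. K x) = htop p g (K a \<union> (\<Union>x\<in>F. K x))" by simp
    also have "\<dots> \<le> max (htop p g (K a)) (htop p g (\<Union>x\<in>F. K x))"
      by (rule htop_union) (use Kne insert.hyps(2) in auto)
    finally have *: "htop p g (\<Union>x\<in>insert a F. K x) \<le> max (htop p g (K a)) (htop p g (\<Union>x\<in>F. K x))" .
    show ?case
    proof (cases "htop p g (K a) \<le> htop p g (\<Union>x\<in>F. K x)")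
      case True then show ?thesis using * x by (intro bexI[of _ x]) (auto simp: max_def)
    next
      case False then show ?thesis using * by (intro bexI[of _ a]) (auto simp: max_def)
    qed
  qed
  then obtain x where "htop p g UNIV \<le> htop p g (K x)" using UK by auto
  moreover have "htop p g (K x) \<le> htop p g UNIV" by (rule htop_mono[OF Kne]) simp
  ultimately show False using K(3)[of x] by simp
qed

end
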